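(* Fix $\varepsilon\in(0,\frac12)$ and $\delta\in(0,\frac12)$, and let $m\ge1$. There exist absolute constants $c_1,c_2>0$ and an integer $p_0=p_0(\varepsilon,\delta)$ such that for all $p\ge p_0$ the following hold. For every $n\le (p-1)(\log\frac1\varepsilon-1)$ and every (possibly randomized) label-permutation-equivariant learner $\mathcal{A}$, with $\widehat f=\mathcal{A}(S)$ for $S=\{(X_i,f(X_i))\}_{i=1}^n$, $X_i$ i.i.d. $\sim\mathcal{D}_X$, \[ \mathbb{P}\big[L(\widehat f)\le\varepsilon\big]\ \le\ \exp\!\Big(-\frac{(e-1)^2}{2\log(1/\varepsilon)}\varepsilon^2p\Big)+\exp(-c_1\varepsilon p)+\exp\!\Big(-\frac{c_2\varepsilon^2p}{\log(1/\varepsilon)}\Big), \] and this right-hand side is at most $\delta$. Consequently, every label-permutation-equivariant learner that, with probability at least $1-\delta$ over $S$ and its internal randomness, achieves $L(\widehat f)\le\varepsilon$ must use $n\ge (p-1)(\log\frac1\varepsilon-1)=\Omega(p)$ samples.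
   Context: Let $[p]=\{0,\dots,p-1\}$, $e_r$ the standard basis of $\mathbb{R}^p$, $\mathcal{X}_m=\{x\in\{0,\dots,m\}^p:\|x\|_1=m\}$, and $\mathcal{D}_X$ the law of $X=\sum_{i=1}^m e_{s_i}$ with $s_1,\dots,s_m$ i.i.d. uniform on $[p]$. The ground-truth rule is $f(x)=(\sum_{k\in[p]}k\,x_k)\bmod p$. A (possibly randomized) learning algorithm $\mathcal{A}$ maps a sample $\{(x^{(i)},y^{(i)})\}_{i=1}^n\in(\mathcal{X}_m\times[p])^n$ to a (distribution over) hypothesis $\mathcal{X}_m\to[p]$. $\mathcal{A}$ is label-permutation equivariant if for every sample and every permutation $\sigma$ of $[p]$, $\mathcal{A}(\{(x^{(i)},\sigma(y^{(i)}))\})=\sigma\circ\mathcal{A}(\{(x^{(i)},y^{(i)})\})$ (equality in distribution of the output functions for randomized $\mathcal{A}$). The risk is $L(\widehat f)=\mathbb{P}_{X\sim\mathcal{D}_X}[\widehat f(X)\ne f(X)]$ with $X$ independent of the sample; the outer probability is over the sample and the internal randomness of $\mathcal{A}$. $\log$ is the natural logarithm. *)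

theory Defs
  imports "HOL-Probability.Probability" "HOL-Combinatorics.Permutations"
begin

fun iid_list :: "nat \<Rightarrow> 'a pmf \<Rightarrow> 'a list pmf" where
  "iid_list 0 d = return_pmf []"
| "iid_list (Suc n) d = bind_pmf d (\<lambda>x. map_pmf (\<lambda>xs. x # xs) (iid_list n d))"

text \<open>Vectors in R^p with coordinates indexed by [p] = {0..<p} are represented as
  nat \<Rightarrow> nat functions that vanish outside [p].\<close>
definition Xm :: "nat \<Rightarrow> nat \<Rightarrow> (nat \<Rightarrow> nat) set" where
  "Xm p m = {x. (\<forall>k. p \<le> k \<longrightarrow> x k = 0) \<and> (\<forall>k<p. x k \<le> m) \<and> (\<Sum>k<p. x k) = m}"

text \<open>D_X: law of X = sum_{i=1}^m e_{s_i}, s_i i.i.d. uniform on [p].\<close>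
definition DX :: "nat \<Rightarrow> nat \<Rightarrow> (nat \<Rightarrow> nat) pmf" where
  "DX p m = map_pmf (\<lambda>ss k. length (filter (\<lambda>s. s = k) ss)) (iid_list m (pmf_of_set {..<p}))"

definition target :: "nat \<Rightarrow> (nat \<Rightarrow> nat) \<Rightarrow> nat" where
  "target p x = (\<Sum>k<p. k * x k) mod p"

definition risk :: "nat \<Rightarrow> nat \<Rightarrow> ((nat \<Rightarrow> nat) \<Rightarrow> nat) \<Rightarrow> real" where
  "risk p m h = measure_pmf.prob (DX p m) {x. h x \<noteq> target p x}"

type_synonym learner = "((nat \<Rightarrow> nat) \<times> nat) list \<Rightarrow> ((nat \<Rightarrow> nat) \<Rightarrow> nat) pmf"

definition samples :: "nat \<Rightarrow> nat \<Rightarrow> nat \<Rightarrow> ((nat \<Rightarrow> nat) \<times> nat) list set" where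
  "samples p m n = {S. length S = n \<and> (\<forall>(x,y)\<in>set S. x \<in> Xm p m \<and> y < p)}"

text \<open>A (randomized) learner on samples of size n: outputs hypotheses X_m \<rightarrow> [p].
  Hypotheses are only compared on X_m (values outside X_m are irrelevant).\<close>
definition valid_learner :: "nat \<Rightarrow> nat \<Rightarrow> nat \<Rightarrow> learner \<Rightarrow> bool" where
  "valid_learner p m n A \<longleftrightarrow>
     (\<forall>S\<in>samples p m n. \<forall>h\<in>set_pmf (A S). \<forall>x\<in>Xm p m. h x < p)"

definition label_perm_equivariant :: "nat \<Rightarrow> nat \<Rightarrow> nat \<Rightarrow> learner \<Rightarrow> bool" where
  "label_perm_equivariant p m n A \<longleftrightarrow>
     (\<forall>S\<in>samples p m n. \<forall>\<sigma>. \<sigma> permutes {..<p} \<longrightarrow>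
        map_pmf (\<lambda>h. restrict h (Xm p m)) (A (map (\<lambda>(x,y). (x, \<sigma> y)) S))
        = map_pmf (\<lambda>h. restrict (\<sigma> \<circ> h) (Xm p m)) (A S))"

definition sample_dist :: "nat \<Rightarrow> nat \<Rightarrow> nat \<Rightarrow> ((nat \<Rightarrow> nat) \<times> nat) list pmf" where
  "sample_dist p m n = map_pmf (map (\<lambda>x. (x, target p x))) (iid_list n (DX p m))"

definition output_dist :: "nat \<Rightarrow> nat \<Rightarrow> nat \<Rightarrow> learner \<Rightarrow> ((nat \<Rightarrow> nat) \<Rightarrow> nat) pmf" where
  "output_dist p m n A = bind_pmf (sample_dist p m n) A"

end

theory Submission
  imports Defs "HOL-Real_Asymp.Real_Asymp"
begin

lemma iid_map: "map_pmf (map g) (iid_list n d) = iid_list n (map_pmf g d)"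
proof (induction n)
  case 0 then show ?case by simp
next
  case (Suc n)
  have "map_pmf (map g) (iid_list (Suc n) d) = bind_pmf d (\<lambda>x. map_pmf (\<lambda>xs. g x # xs) (map_pmf (map g) (iid_list n d)))"
    by (simp add: map_bind_pmf pmf.map_comp o_def)
  also have "\<dots> = iid_list (Suc n) (map_pmf g d)"
    by (simp add: Suc bind_map_pmf)
  finally show ?case .
qed

lemma iid_set: "xs \<in> set_pmf (iid_list n d) \<Longrightarrow> length xs = n \<and> set xs \<subseteq> set_pmf d"
proof (induction n arbitrary: xs)
  case 0 then show ?case by simp
next
  case (Suc n)
  then obtain x ys where "x \<in> set_pmf d" "ys \<in> set_pmf (iid_list n d)" "xs = x # ys" by auto
  with Suc.IH[of ys] show ?case by auto
qed

lemma unif_set[simp]: "p > 0 \<Longrightarrow> set_pmf (pmf_of_set {..<(p::nat)}) = {..<p}"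
  by (simp add: lessThan_empty_iff)

lemma count_sum: "set ss \<subseteq> {..<(p::nat)} \<Longrightarrow> (\<Sum>k<p. length (filter (\<lambda>s. s = k) ss)) = length ss"
proof (induction ss)
  case Nil then show ?case by simp
next
  case (Cons a ss)
  then have "(\<Sum>k<p. length (filter (\<lambda>s. s = k) (a # ss))) = (\<Sum>k<p. (if a = k then 1 else 0) + length (filter (\<lambda>s. s = k) ss))"
    by (intro sum.cong) auto
  also have "\<dots> = (\<Sum>k<p. if a = k then 1 else 0) + length ss" using Cons by (simp add: sum.distrib)
  also have "(\<Sum>k<p. if a = k then 1 else 0) = (1::nat)" using Cons.prems by (subst sum.delta'[OF finite_lessThan]) auto
  finally show ?case by simp
qed

lemma count_wsum: "set ss \<subseteq> {..<(p::nat)} \<Longrightarrow> (\<Sum>k<p. k * length (filter (\<lambda>s. s = k) ss)) = sum_list ss"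
proof (induction ss)
  case Nil then show ?case by simp
next
  case (Cons a ss)
  then have "(\<Sum>k<p. k * length (filter (\<lambda>s. s = k) (a # ss))) = (\<Sum>k<p. (if a = k then a else 0) + k * length (filter (\<lambda>s. s = k) ss))"
    by (intro sum.cong) auto
  also have "\<dots> = a + sum_list ss" using Cons by (simp add: sum.distrib sum.delta'[OF finite_lessThan])
  finally show ?case by simp
qed

lemma count_le: "length (filter (\<lambda>s. s = k) ss) \<le> length ss"
  by simp

lemma DX_support:
  assumes "p > 0" "x \<in> set_pmf (DX p m)"
  shows "x \<in> Xm p m"
proof -
  from assms obtain ss where ss: "ss \<in> set_pmf (iid_list m (pmf_of_set {..<p}))"
    and x: "x = (\<lambda>k. length (filter (\<lambda>s. s = k) ss))"
    unfolding DX_def by auto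
  from iid_set[OF ss] assms(1) have l: "length ss = m" and s: "set ss \<subseteq> {..<p}"
    by auto
  have "\<forall>k. p \<le> k \<longrightarrow> x k = 0"
    using s by (auto simp: x filter_empty_conv)
  moreover have "\<forall>k<p. x k \<le> m" using l by (auto simp: x)
  moreover have "(\<Sum>k<p. x k) = m" using count_sum[OF s] l by (simp add: x)
  ultimately show ?thesis unfolding Xm_def by blast
qed

lemma DX_target:
  assumes "p > 0" "x \<in> set_pmf (DX p m)"
  shows "target p x < p"
  using assms by (simp add: target_def)

lemma modinj: assumes "(x + a) mod p = (x + b) mod p" "a < p" "b < (p::nat)" shows "a = b"
proof -
  have *: "a' = b'" if "(x + a') mod p = (x + b') mod p" "a' < p" "b' < p" "b' \<le> a'" for a' b'
  proof -
    have "p dvd (x + a') - (x + b')" using that by (subst mod_eq_dvd_iff_nat[symmetric]) auto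
    then have "p dvd a' - b'" by simp
    moreover have "a' - b' < p" using that by simp
    ultimately have "a' - b' = 0" using dvd_imp_le by fastforce
    then show ?thesis using that by simp
  qed
  show ?thesis using *[of a b] *[of b a] assms by (cases "b \<le> a") auto
qed
lemma unif_shift:
  assumes "p > 0"
  shows "map_pmf (\<lambda>r. (x + r) mod p) (pmf_of_set {..<p}) = pmf_of_set {..<(p::nat)}"
proof -
  have inj: "inj_on (\<lambda>r. (x + r) mod p) {..<p}"
  proof (rule inj_onI)
    fix a b assume a: "a \<in> {..<p}" and b: "b \<in> {..<p}" and e: "(x + a) mod p = (x + b) mod p"
    from a b have "a < p" "b < p" by auto
    then show "a = b" by (rule modinj[OF e])
  qed
  have sub: "(\<lambda>r. (x + r) mod p) ` {..<p} \<subseteq> {..<p}"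
    using assms by auto
  have img: "(\<lambda>r. (x + r) mod p) ` {..<p} = {..<p}"
    by (rule endo_inj_surj[OF finite_lessThan sub inj])
  have ne: "{..<p} \<noteq> {}" using assms by auto
  show ?thesis using map_pmf_of_set_inj[OF inj ne finite_lessThan] unfolding img .
qed

lemma sum_unif:
  assumes "p > 0"
  shows "map_pmf (\<lambda>ss. sum_list ss mod p) (iid_list (Suc k) (pmf_of_set {..<p})) = pmf_of_set {..<(p::nat)}"
proof (induction k)
  case 0
  have "map_pmf (\<lambda>ss. sum_list ss mod p) (iid_list (Suc 0) (pmf_of_set {..<p})) =
     map_pmf (\<lambda>x. x mod p) (pmf_of_set {..<p})"
    by (simp add: map_bind_pmf map_pmf_def[symmetric] pmf.map_comp o_def)
  also have "\<dots> = map_pmf (\<lambda>x. x) (pmf_of_set {..<p})"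
    using assms by (intro map_pmf_cong) auto
  finally show ?case by simp
next
  case (Suc k)
  have "map_pmf (\<lambda>ss. sum_list ss mod p) (iid_list (Suc (Suc k)) (pmf_of_set {..<p})) =
    bind_pmf (pmf_of_set {..<p}) (\<lambda>x. map_pmf (\<lambda>r. (x + r) mod p)
       (map_pmf (\<lambda>ss. sum_list ss mod p) (iid_list (Suc k) (pmf_of_set {..<p}))))"
    (is "_ = ?R")
  proof -
    have "map_pmf (\<lambda>ss. sum_list ss mod p) (iid_list (Suc (Suc k)) (pmf_of_set {..<p})) =
      bind_pmf (pmf_of_set {..<p}) (\<lambda>x. map_pmf (\<lambda>ss. sum_list ss mod p) (map_pmf (\<lambda>xs. x # xs) (iid_list (Suc k) (pmf_of_set {..<p}))))"
      by (subst iid_list.simps(2)) (rule map_bind_pmf)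
    also have "\<dots> = ?R"
      by (simp only: pmf.map_comp o_def sum_list.Cons mod_add_right_eq)
    finally show ?thesis .
  qed
  also have "\<dots> = bind_pmf (pmf_of_set {..<p}) (\<lambda>x. map_pmf (\<lambda>r. (x + r) mod p) (pmf_of_set {..<p}))"
    by (simp only: Suc)
  also have "\<dots> = bind_pmf (pmf_of_set {..<p}) (\<lambda>x. pmf_of_set {..<p})"
    by (simp add: unif_shift[OF assms])
  finally show ?case by simp
qed

lemma DX_target_unif:
  assumes "p > 0" "m \<ge> 1"
  shows "map_pmf (target p) (DX p m) = pmf_of_set {..<p}"
proof -
  obtain k where m: "m = Suc k" using assms(2) by (cases m) auto
  have "map_pmf (target p) (DX p m) = map_pmf (\<lambda>ss. sum_list ss mod p) (iid_list m (pmf_of_set {..<p}))"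
    unfolding DX_def pmf.map_comp
  proof (rule map_pmf_cong[OF refl])
    fix ss assume "ss \<in> set_pmf (iid_list m (pmf_of_set {..<p}))"
    then have "set ss \<subseteq> {..<p}" using iid_set assms(1) by fastforce
    then show "(target p \<circ> (\<lambda>ss k. length (filter (\<lambda>s. s = k) ss))) ss = sum_list ss mod p"
      by (simp add: target_def count_wsum)
  qed
  then show ?thesis using sum_unif[OF assms(1)] m by simp
qed

lemma sample_labels:
  assumes "p > 0" "m \<ge> 1"
  shows "map_pmf (map snd) (sample_dist p m n) = iid_list n (pmf_of_set {..<p})"
proof -
  have "map_pmf (map snd) (sample_dist p m n) = map_pmf (map (target p)) (iid_list n (DX p m))"
    unfolding sample_dist_def pmf.map_comp by (simp add: o_def)
  also have "\<dots> = iid_list n (map_pmf (target p) (DX p m))" by (rule iid_map)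
  also have "\<dots> = iid_list n (pmf_of_set {..<p})" by (simp add: DX_target_unif[OF assms])
  finally show ?thesis .
qed

lemma sample_support:
  assumes "p > 0" "S \<in> set_pmf (sample_dist p m n)"
  shows "S \<in> samples p m n"
proof -
  from assms obtain xs where xs: "xs \<in> set_pmf (iid_list n (DX p m))" and S: "S = map (\<lambda>x. (x, target p x)) xs"
    unfolding sample_dist_def by auto
  from iid_set[OF xs] have l: "length xs = n" and s: "set xs \<subseteq> set_pmf (DX p m)" by auto
  have "\<forall>x\<in>set xs. x \<in> Xm p m" using DX_support[OF assms(1)] s by blast
  moreover have "\<forall>x. target p x < p" using assms(1) by (simp add: target_def)
  ultimately show ?thesis unfolding samples_def S using l by auto
qed

definition Phi :: "real \<Rightarrow> nat \<Rightarrow> nat \<Rightarrow> real" where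
  "Phi g p d = (\<Prod>j<d. 1 + g * real p / real (p - j))"

lemma Phi_ge1: "g \<ge> 0 \<Longrightarrow> Phi g p d \<ge> 1"
  unfolding Phi_def by (rule prod_ge_1) auto

lemma Phi_nonneg: "g \<ge> 0 \<Longrightarrow> Phi g p d \<ge> 0"
  using Phi_ge1[of g p d] by linarith

lemma Phi_mono: assumes "g \<ge> 0" "d \<le> d'" shows "Phi g p d \<le> Phi g p d'"
proof -
  have "Phi g p d' = Phi g p d * (\<Prod>j\<in>{d..<d'}. 1 + g * real p / real (p - j))"
    unfolding Phi_def using assms(2)
    by (metis atLeast0LessThan le0 prod.atLeastLessThan_concat)
  moreover have "(\<Prod>j\<in>{d..<d'}. 1 + g * real p / real (p - j)) \<ge> 1"
    using assms by (intro prod_ge_1) auto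
  moreover have "Phi g p d \<ge> 0" using Phi_nonneg[OF assms(1)] by blast
  ultimately show ?thesis by (metis mult_left_mono mult.right_neutral)
qed

lemma Phi_Suc: "Phi g p (Suc d) = Phi g p d * (1 + g * real p / real (p - d))"
  unfolding Phi_def by simp

lemma sum_step:
  assumes p: "p > 0" and g: "g \<ge> 0" and T: "T \<subseteq> {..<p}"
  shows "(\<Sum>x<p. Phi g p (card (insert x T))) \<le> real p * (1 + g) * Phi g p (card T)"
proof -
  have fT: "finite T" using T finite_subset by blast
  define t where "t = card T"
  have tp: "t \<le> p" using card_mono[OF _ T] by (simp add: t_def)
  have "(\<Sum>x<p. Phi g p (card (insert x T))) = (\<Sum>x\<in>T. Phi g p (card (insert x T))) + (\<Sum>x\<in>{..<p} - T. Phi g p (card (insert x T)))"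
    using T by (metis finite_lessThan sum.subset_diff add.commute)
  also have "\<dots> = real t * Phi g p t + real (p - t) * Phi g p (Suc t)"
  proof -
    have "(\<Sum>x\<in>T. Phi g p (card (insert x T))) = (\<Sum>x\<in>T. Phi g p t)"
      by (intro sum.cong) (auto simp: t_def insert_absorb)
    moreover have "(\<Sum>x\<in>{..<p} - T. Phi g p (card (insert x T))) = (\<Sum>x\<in>{..<p} - T. Phi g p (Suc t))"
      by (intro sum.cong) (auto simp: t_def fT)
    moreover have "card ({..<p} - T) = p - t" using T fT by (simp add: card_Diff_subset t_def)
    ultimately show ?thesis by (simp add: t_def)
  qed
  also have "\<dots> \<le> real p * (1 + g) * Phi g p t"
  proof (cases "t < p")
    case True
    have "real (p - t) * Phi g p (Suc t) = Phi g p t * (real (p - t) + g * real p)"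
      using True by (simp add: Phi_Suc field_simps)
    then have "real t * Phi g p t + real (p - t) * Phi g p (Suc t) = Phi g p t * (real p + g * real p)"
      using True by (simp add: algebra_simps of_nat_diff)
    then show ?thesis by (simp add: algebra_simps)
  next
    case False
    then have "t = p" using tp by simp
    then show ?thesis using g Phi_ge1[OF g, of p t] by (simp add: algebra_simps mult_nonneg_nonneg)
  qed
  finally show ?thesis by (simp add: t_def)
qed

lemma potential:
  assumes p: "p > 0" and g: "g \<ge> 0"
  shows "T \<subseteq> {..<p} \<Longrightarrow> (\<integral>\<^sup>+ys. ennreal (Phi g p (card (T \<union> (set ys \<inter> {..<p})))) \<partial>iid_list n (pmf_of_set {..<p}))
     \<le> ennreal ((1 + g) ^ n * Phi g p (card T))"
proof (induction n arbitrary: T)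
  case 0
  then show ?case by simp
next
  case (Suc n)
  have "(\<integral>\<^sup>+ys. ennreal (Phi g p (card (T \<union> (set ys \<inter> {..<p})))) \<partial>iid_list (Suc n) (pmf_of_set {..<p}))
      = (\<integral>\<^sup>+x. (\<integral>\<^sup>+ys. ennreal (Phi g p (card (T \<union> (set (x # ys) \<inter> {..<p})))) \<partial>iid_list n (pmf_of_set {..<p})) \<partial>pmf_of_set {..<p})"
    by simp
  also have "\<dots> \<le> (\<integral>\<^sup>+x. ennreal ((1 + g) ^ n * Phi g p (card (insert x T))) \<partial>pmf_of_set {..<p})"
  proof (rule nn_integral_mono_AE)
    show "AE x in measure_pmf (pmf_of_set {..<p}). (\<integral>\<^sup>+ys. ennreal (Phi g p (card (T \<union> (set (x # ys) \<inter> {..<p})))) \<partial>iid_list n (pmf_of_set {..<p}))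
       \<le> ennreal ((1 + g) ^ n * Phi g p (card (insert x T)))"
    proof (rule AE_pmfI)
      fix x assume "x \<in> set_pmf (pmf_of_set {..<p})"
      then have x: "x < p" using p by simp
      have e: "\<And>ys. T \<union> (set (x # ys) \<inter> {..<p}) = insert x T \<union> (set ys \<inter> {..<p})" using x by auto
      show "(\<integral>\<^sup>+ys. ennreal (Phi g p (card (T \<union> (set (x # ys) \<inter> {..<p})))) \<partial>iid_list n (pmf_of_set {..<p}))
       \<le> ennreal ((1 + g) ^ n * Phi g p (card (insert x T)))"
        unfolding e using Suc.IH[of "insert x T"] Suc.prems x by auto
    qed
  qed
  also have "\<dots> = ennreal (\<integral>x. (1 + g) ^ n * Phi g p (card (insert x T)) \<partial>pmf_of_set {..<p})"
    using p g Phi_nonneg[OF g]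
    by (intro nn_integral_eq_integral integrable_measure_pmf_finite AE_I2) (auto simp: lessThan_empty_iff)
  also have "\<dots> = ennreal ((1 + g) ^ n * (\<Sum>x<p. Phi g p (card (insert x T))) / real p)"
    using p by (simp add: integral_pmf_of_set lessThan_empty_iff sum_distrib_left)
  also have "\<dots> \<le> ennreal ((1 + g) ^ n * (real p * (1 + g) * Phi g p (card T)) / real p)"
    using sum_step[OF p g Suc.prems] g p by (intro ennreal_leI divide_right_mono mult_left_mono) auto
  also have "\<dots> = ennreal ((1 + g) ^ Suc n * Phi g p (card T))"
  proof -
    have "(1 + g) ^ n * (real p * (1 + g) * Phi g p (card T)) / real p = (1 + g) ^ Suc n * Phi g p (card T)"
      using p by (simp add: field_simps)
    then show ?thesis by simp
  qed
  finally show ?case .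
qed

lemma markov1:
  assumes p: "p > 0" and g: "g \<ge> 0"
  shows "emeasure (iid_list n (pmf_of_set {..<p})) {ys. r \<le> card (set ys \<inter> {..<p})}
     \<le> ennreal ((1 + g) ^ n / Phi g p r)"
proof -
  have pos: "Phi g p r > 0" using Phi_ge1[OF g, of p r] by linarith
  have "emeasure (iid_list n (pmf_of_set {..<p})) {ys. r \<le> card (set ys \<inter> {..<p})}
     = (\<integral>\<^sup>+ys. indicator {ys. r \<le> card (set ys \<inter> {..<p})} ys \<partial>iid_list n (pmf_of_set {..<p}))"
    by simp
  also have "\<dots> \<le> (\<integral>\<^sup>+ys. ennreal (1 / Phi g p r) * ennreal (Phi g p (card ({} \<union> (set ys \<inter> {..<p})))) \<partial>iid_list n (pmf_of_set {..<p}))"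
  proof (rule nn_integral_mono)
    fix ys
    show "indicator {ys. r \<le> card (set ys \<inter> {..<p})} ys \<le> ennreal (1 / Phi g p r) * ennreal (Phi g p (card ({} \<union> (set ys \<inter> {..<p}))))"
    proof (cases "r \<le> card (set ys \<inter> {..<p})")
      case True
      then have "Phi g p r \<le> Phi g p (card (set ys \<inter> {..<p}))" by (rule Phi_mono[OF g])
      then have "1 \<le> (1 / Phi g p r) * Phi g p (card (set ys \<inter> {..<p}))" using pos by (simp add: field_simps)
      then show ?thesis using True pos Phi_ge1[OF g] by (simp add: ennreal_mult[symmetric] ennreal_ge_1)
    qed simp
  qed
  also have "\<dots> = ennreal (1 / Phi g p r) * (\<integral>\<^sup>+ys. ennreal (Phi g p (card ({} \<union> (set ys \<inter> {..<p})))) \<partial>iid_list n (pmf_of_set {..<p}))"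
    by (rule nn_integral_cmult) simp
  also have "\<dots> \<le> ennreal (1 / Phi g p r) * ennreal ((1 + g) ^ n * Phi g p (card ({}::nat set)))"
    by (intro mult_left_mono potential[OF p g]) auto
  also have "\<dots> = ennreal ((1 + g) ^ n / Phi g p r)"
    using pos g by (simp add: Phi_def ennreal_mult[symmetric])
  finally show ?thesis .
qed

lemma perm_prod_bound:
  fixes Y :: "'a \<Rightarrow> 'a \<Rightarrow> real"
  assumes "finite S"
  shows "(\<forall>a\<in>S. \<forall>b. 0 \<le> Y a b) \<Longrightarrow> (\<forall>a\<in>S. (\<Sum>b\<in>S. Y a b) \<le> 1) \<Longrightarrow>
    (\<Sum>\<sigma>\<in>{\<sigma>. \<sigma> permutes S}. \<Prod>a\<in>S. (1 + 2 * Y a (\<sigma> a)))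
      \<le> fact (card S) * ((real (card S) + 1) * (real (card S) + 2) / 2)"
  using assms
proof (induction S arbitrary: Y rule: finite_induct)
  case empty
  then show ?case by (simp add: permutes_empty)
next
  case (insert a S)
  define n where "n = card S"
  define K where "K = fact n * ((real n + 1) * (real n + 2) / 2)"
  have cardi: "card (insert a S) = Suc n" using insert n_def by simp
  have inner: "(\<Sum>q\<in>{q. q permutes S}. \<Prod>x\<in>S. (1 + 2 * Y x (Transposition.transpose a b (q x)))) \<le> K"
    if b: "b \<in> insert a S" for b
  proof -
    have "(\<Sum>q\<in>{q. q permutes S}. \<Prod>x\<in>S. (1 + 2 * (\<lambda>x c. Y x (Transposition.transpose a b c)) x (q x))) \<le> K"
      unfolding K_def n_def
    proof (rule insert.IH)
      show "\<forall>x\<in>S. \<forall>c. 0 \<le> Y x (Transposition.transpose a b c)" using insert.prems by auto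
      show "\<forall>x\<in>S. (\<Sum>c\<in>S. Y x (Transposition.transpose a b c)) \<le> 1"
      proof
        fix x assume x: "x \<in> S"
        have "(\<Sum>c\<in>S. Y x (Transposition.transpose a b c)) = (\<Sum>d\<in>Transposition.transpose a b ` S. Y x d)"
          by (subst sum.reindex) (auto intro: inj_on_subset[OF bij_is_inj[OF Transposition.bij_transpose]])
        also have "\<dots> \<le> (\<Sum>d\<in>insert a S. Y x d)"
        proof (rule sum_mono2)
          show "finite (insert a S)" using insert by simp
          show "Transposition.transpose a b ` S \<subseteq> insert a S" using b by (auto simp: Transposition.transpose_def)
          show "\<And>d. d \<in> insert a S - Transposition.transpose a b ` S \<Longrightarrow> 0 \<le> Y x d" using insert.prems x by auto
        qed
        also have "\<dots> \<le> 1" using insert.prems x by auto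
        finally show "(\<Sum>c\<in>S. Y x (Transposition.transpose a b c)) \<le> 1" .
      qed
    qed
    then show ?thesis by simp
  qed
  have "(\<Sum>\<sigma>\<in>{\<sigma>. \<sigma> permutes insert a S}. \<Prod>x\<in>insert a S. (1 + 2 * Y x (\<sigma> x)))
     = (\<Sum>b\<in>insert a S. \<Sum>q\<in>{q. q permutes S}. \<Prod>x\<in>insert a S. (1 + 2 * Y x ((Transposition.transpose a b \<circ> q) x)))"
    by (rule sum_over_permutations_insert) (use insert in auto)
  also have "\<dots> = (\<Sum>b\<in>insert a S. (1 + 2 * Y a b) * (\<Sum>q\<in>{q. q permutes S}. \<Prod>x\<in>S. (1 + 2 * Y x (Transposition.transpose a b (q x)))))"
  proof (rule sum.cong[OF refl])
    fix b assume b: "b \<in> insert a S"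
    have "(\<Sum>q\<in>{q. q permutes S}. \<Prod>x\<in>insert a S. (1 + 2 * Y x ((Transposition.transpose a b \<circ> q) x))) =
          (\<Sum>q\<in>{q. q permutes S}. (1 + 2 * Y a b) * (\<Prod>x\<in>S. (1 + 2 * Y x (Transposition.transpose a b (q x)))))"
    proof (rule sum.cong[OF refl])
      fix q assume "q \<in> {q. q permutes S}"
      then have qa: "q a = a" using insert by (auto simp: permutes_not_in)
      show "(\<Prod>x\<in>insert a S. (1 + 2 * Y x ((Transposition.transpose a b \<circ> q) x))) =
          (1 + 2 * Y a b) * (\<Prod>x\<in>S. (1 + 2 * Y x (Transposition.transpose a b (q x))))"
        using insert qa by (simp add: prod.insert)
    qed
    then show "(\<Sum>q\<in>{q. q permutes S}. \<Prod>x\<in>insert a S. (1 + 2 * Y x ((Transposition.transpose a b \<circ> q) x))) =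
       (1 + 2 * Y a b) * (\<Sum>q\<in>{q. q permutes S}. \<Prod>x\<in>S. (1 + 2 * Y x (Transposition.transpose a b (q x))))"
      by (simp add: sum_distrib_left)
  qed
  also have "\<dots> \<le> (\<Sum>b\<in>insert a S. (1 + 2 * Y a b) * K)"
    by (rule sum_mono, rule mult_left_mono) (use inner insert.prems in auto)
  also have "\<dots> = (real (Suc n) + 2 * (\<Sum>b\<in>insert a S. Y a b)) * K"
    using cardi by (simp add: sum_distrib_right[symmetric] sum.distrib sum_distrib_left[symmetric])
  also have "\<dots> \<le> (real (Suc n) + 2) * K"
    using insert.prems by (intro mult_right_mono) (auto simp: K_def)
  also have "\<dots> = fact (card (insert a S)) * ((real (card (insert a S)) + 1) * (real (card (insert a S)) + 2) / 2)"
    by (simp add: cardi K_def algebra_simps)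
  finally show ?case .
qed

lemma harm_lower:
  fixes s p :: nat
  assumes "s \<le> p"
  shows "ln ((real p + 1) / (real s + 1)) \<le> (\<Sum>i\<in>{s+1..p}. 1 / real i)"
  using assms
proof (induction p rule: dec_induct)
  case base then show ?case by simp
next
  case (step q)
  have e: "{s+1..Suc q} = insert (Suc q) {s+1..q}" using step by auto
  have "ln ((real (Suc q) + 1) / (real s + 1)) = ln ((real q + 1) / (real s + 1)) + ln ((real q + 2) / (real q + 1))"
    by (simp add: ln_div[symmetric] ln_mult[symmetric] field_simps) (simp add: ln_div)
  also have "ln ((real q + 2) / (real q + 1)) \<le> 1 / real (Suc q)"
  proof -
    have "ln ((real q + 2) / (real q + 1)) = ln (1 + 1 / (real q + 1))" by (simp add: field_simps)
    also have "\<dots> \<le> 1 / (real q + 1)" by (rule ln_add_one_self_le_self) simp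
    finally show ?thesis by (simp add: add.commute)
  qed
  ultimately show ?case using step e by simp
qed

lemma harm2_upper:
  fixes s p :: nat
  assumes "1 \<le> s" "s \<le> p"
  shows "(\<Sum>i\<in>{s+1..p}. 1 / real i ^ 2) \<le> 1 / real s - 1 / real p"
  using assms(2)
proof (induction p rule: dec_induct)
  case base then show ?case by simp
next
  case (step q)
  have e: "{s+1..Suc q} = insert (Suc q) {s+1..q}" using step by auto
  have q: "real q \<ge> 1" using assms step by simp
  have "1 / real (Suc q) ^ 2 \<le> 1 / real q - 1 / real (Suc q)"
  proof -
    have "1 / real (Suc q) ^ 2 = 1 / ((real q + 1) * (real q + 1))" by (simp add: power2_eq_square add.commute)
    also have "\<dots> \<le> 1 / (real q * (real q + 1))"
      using q by (intro divide_left_mono mult_right_mono mult_pos_pos) auto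
    also have "\<dots> = 1 / real q - 1 / real (Suc q)" using q by (simp add: field_simps)
    finally show ?thesis .
  qed
  then show ?case using step e by simp
qed

lemma Phi_reindex:
  assumes "s \<le> p"
  shows "Phi g p (p - s) = (\<Prod>i\<in>{s+1..p}. 1 + g * real p / real i)"
proof -
  have img: "(\<lambda>j. p - j) ` {..<p - s} = {s+1..p}"
  proof
    show "(\<lambda>j. p - j) ` {..<p - s} \<subseteq> {s + 1..p}" by auto
    show "{s + 1..p} \<subseteq> (\<lambda>j. p - j) ` {..<p - s}"
    proof
      fix i assume "i \<in> {s+1..p}"
      then have "i = p - (p - i)" "p - i \<in> {..<p - s}" by auto
      then show "i \<in> (\<lambda>j. p - j) ` {..<p - s}" by blast
    qed
  qed
  have inj: "inj_on (\<lambda>j. p - j) {..<p - s}" by (rule inj_onI) auto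
  show ?thesis unfolding Phi_def img[symmetric] prod.reindex[OF inj] by (simp add: o_def)
qed

lemma Phi_lower:
  assumes g: "g \<ge> 0" and s: "1 \<le> s" "s \<le> p" and gp: "g * real p \<le> real s + 1"
  shows "Phi g p (p - s) \<ge> exp (g * real p * ln ((real p + 1) / (real s + 1)) - g^2 * real p ^ 2 / real s)"
proof -
  have "exp (g * real p * ln ((real p + 1) / (real s + 1)) - g^2 * real p ^ 2 / real s)
      \<le> exp (g * real p * (\<Sum>i\<in>{s+1..p}. 1 / real i) - g^2 * real p ^ 2 * (\<Sum>i\<in>{s+1..p}. 1 / real i ^ 2))"
  proof -
    have "g * real p * ln ((real p + 1) / (real s + 1)) \<le> g * real p * (\<Sum>i\<in>{s+1..p}. 1 / real i)"
      using harm_lower[OF s(2)] g by (intro mult_left_mono) auto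
    moreover have "g^2 * real p ^ 2 * (\<Sum>i\<in>{s+1..p}. 1 / real i ^ 2) \<le> g^2 * real p ^ 2 / real s"
    proof -
      have "g^2 * real p ^ 2 * (\<Sum>i\<in>{s+1..p}. 1 / real i ^ 2) \<le> g^2 * real p ^ 2 * (1 / real s - 1 / real p)"
        using harm2_upper[OF s] by (intro mult_left_mono) auto
      also have "\<dots> \<le> g^2 * real p ^ 2 * (1 / real s)"
        by (intro mult_left_mono) auto
      finally show ?thesis by simp
    qed
    ultimately show ?thesis by simp
  qed
  also have "\<dots> = exp (\<Sum>i\<in>{s+1..p}. (g * real p / real i) - (g * real p / real i)^2)"
    by (simp add: sum_subtractf sum_distrib_left power_divide power_mult_distrib)
  also have "\<dots> = (\<Prod>i\<in>{s+1..p}. exp ((g * real p / real i) - (g * real p / real i)^2))"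
    by (rule exp_sum) simp
  also have "\<dots> \<le> (\<Prod>i\<in>{s+1..p}. 1 + g * real p / real i)"
  proof (rule prod_mono)
    fix i assume i: "i \<in> {s+1..p}"
    have x0: "0 \<le> g * real p / real i" using g by simp
    have x1: "g * real p / real i \<le> 1" using i gp by (simp add: field_simps)
    have "exp ((g * real p / real i) - (g * real p / real i)^2) \<le> exp (ln (1 + g * real p / real i))"
      using ln_one_plus_pos_lower_bound[OF x0 x1] by simp
    also have "\<dots> = 1 + g * real p / real i" using x0 by simp
    finally show "0 \<le> exp ((g * real p / real i) - (g * real p / real i)^2) \<and>
       exp ((g * real p / real i) - (g * real p / real i)^2) \<le> 1 + g * real p / real i" by simp
  qed
  also have "\<dots> = Phi g p (p - s)" using Phi_reindex[OF s(2)] by simp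
  finally show ?thesis .
qed

lemma risk_restrict:
  assumes "p > 0"
  shows "risk p m (restrict h (Xm p m)) = risk p m h"
proof -
  have "{x. restrict h (Xm p m) x \<noteq> target p x} \<inter> set_pmf (DX p m) = {x. h x \<noteq> target p x} \<inter> set_pmf (DX p m)"
    using DX_support[OF assms] by auto
  then show ?thesis unfolding risk_def by (metis measure_Int_set_pmf)
qed

lemma target_unif_prob:
  assumes "p > 0" "m \<ge> 1" "U \<subseteq> {..<p}"
  shows "measure_pmf.prob (DX p m) {x. target p x \<in> U} = real (card U) / real p"
proof -
  have "measure_pmf.prob (DX p m) {x. target p x \<in> U} = measure_pmf.prob (map_pmf (target p) (DX p m)) U"
    by (simp add: vimage_def)
  also have "\<dots> = real (card U) / real p" using assms
    by (simp add: DX_target_unif measure_pmf_of_set lessThan_empty_iff Int_absorb1)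
  finally show ?thesis .
qed

lemma pointwise_bound:
  fixes h :: "(nat \<Rightarrow> nat) \<Rightarrow> nat"
  assumes p: "p > 0" "m \<ge> 1" and U: "U \<subseteq> {..<p}" and eps: "\<epsilon> \<ge> 0"
  shows "measure_pmf.prob (pmf_of_set {\<sigma>. \<sigma> permutes U}) {\<sigma>. risk p m (inv \<sigma> \<circ> h) \<le> \<epsilon>}
     \<le> (real (card U) + 1) * (real (card U) + 2) / 2 * exp (\<epsilon> * real p - real (card U))"
proof -
  define u where "u = card U"
  have fU: "finite U" using U finite_subset by blast
  define PU where "PU = {\<sigma>. \<sigma> permutes U}"
  have fPU: "finite PU" unfolding PU_def by (rule finite_permutations[OF fU])
  have cPU: "card PU = fact u" unfolding PU_def u_def by (rule card_permutations[OF refl fU])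
  have nePU: "PU \<noteq> {}" unfolding PU_def using permutes_id by blast
  define W where "W = map_pmf (\<lambda>x. (target p x, h x)) (DX p m)"
  define Y where "Y = (\<lambda>a b. real p * pmf W (a, b))"
  have Y0: "\<forall>a\<in>U. \<forall>b. 0 \<le> Y a b" by (simp add: Y_def)
  have Ysum: "(\<Sum>b\<in>U. Y a b) \<le> 1" if a: "a \<in> U" for a
  proof -
    have "(\<Sum>b\<in>U. pmf W (a, b)) = measure_pmf.prob W ((\<lambda>b. (a, b)) ` U)"
      using fU by (simp add: measure_measure_pmf_finite sum.reindex inj_on_def)
    also have "\<dots> \<le> measure_pmf.prob W ({a} \<times> UNIV)"
      by (rule measure_pmf.finite_measure_mono) auto
    also have "\<dots> = measure_pmf.prob (DX p m) {x. target p x \<in> {a}}"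
      unfolding W_def by (simp add: vimage_def)
    also have "\<dots> = 1 / real p"
      using target_unif_prob[OF p, of "{a}"] a U by auto
    finally have "(\<Sum>b\<in>U. pmf W (a, b)) \<le> 1 / real p" .
    then have "real p * (\<Sum>b\<in>U. pmf W (a, b)) \<le> 1" using p by (simp add: field_simps)
    then show ?thesis by (simp add: Y_def sum_distrib_left)
  qed
  have Y1: "Y a b \<le> 1" if "a \<in> U" "b \<in> U" for a b
  proof -
    have "Y a b \<le> (\<Sum>b\<in>U. Y a b)"
      using that fU Y0 by (intro member_le_sum) auto
    then show ?thesis using Ysum[OF that(1)] by linarith
  qed
  have riskbound: "risk p m (inv \<sigma> \<circ> h) \<ge> real u / real p - (\<Sum>a\<in>U. pmf W (a, \<sigma> a))"
    if s: "\<sigma> \<in> PU" for \<sigma>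
  proof -
    have sp: "\<sigma> permutes U" using s by (simp add: PU_def)
    define G where "G = (\<lambda>a. (a, \<sigma> a)) ` U"
    have "{x. target p x \<in> U} \<subseteq> {x. (inv \<sigma> \<circ> h) x \<noteq> target p x} \<union> {x. (target p x, h x) \<in> G}"
    proof
      fix x assume "x \<in> {x. target p x \<in> U}"
      then have xu: "target p x \<in> U" by simp
      show "x \<in> {x. (inv \<sigma> \<circ> h) x \<noteq> target p x} \<union> {x. (target p x, h x) \<in> G}"
      proof (cases "inv \<sigma> (h x) = target p x")
        case True
        then have "h x = \<sigma> (target p x)" using permutes_inverses(1)[OF sp, of "h x"] by simp
        then show ?thesis using xu by (auto simp: G_def)
      qed simp
    qed
    then have "measure_pmf.prob (DX p m) {x. target p x \<in> U} \<le>
       measure_pmf.prob (DX p m) ({x. (inv \<sigma> \<circ> h) x \<noteq> target p x} \<union> {x. (target p x, h x) \<in> G})"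
      by (rule measure_pmf.finite_measure_mono) simp
    also have "\<dots> \<le> measure_pmf.prob (DX p m) {x. (inv \<sigma> \<circ> h) x \<noteq> target p x} + measure_pmf.prob (DX p m) {x. (target p x, h x) \<in> G}"
      by (rule measure_subadditive) (auto simp: measure_pmf.emeasure_eq_measure)
    also have "measure_pmf.prob (DX p m) {x. (target p x, h x) \<in> G} = measure_pmf.prob W G"
      unfolding W_def by (simp add: vimage_def)
    also have "\<dots> = (\<Sum>a\<in>U. pmf W (a, \<sigma> a))"
      using fU unfolding G_def by (simp add: measure_measure_pmf_finite sum.reindex inj_on_def)
    finally show ?thesis
      using target_unif_prob[OF p U] unfolding risk_def u_def by simp
  qed
  have ind: "indicator {\<sigma>. risk p m (inv \<sigma> \<circ> h) \<le> \<epsilon>} \<sigma> \<le>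
      exp (\<epsilon> * real p - real u) * (\<Prod>a\<in>U. (1 + 2 * Y a (\<sigma> a)))" if s: "\<sigma> \<in> PU" for \<sigma>
  proof -
    have sp: "\<sigma> permutes U" using s by (simp add: PU_def)
    have sU: "\<sigma> a \<in> U" if "a \<in> U" for a using sp that by (simp add: permutes_in_image)
    have "exp (\<Sum>a\<in>U. Y a (\<sigma> a)) = (\<Prod>a\<in>U. exp (Y a (\<sigma> a)))" by (rule exp_sum) (rule fU)
    also have "\<dots> \<le> (\<Prod>a\<in>U. (1 + 2 * Y a (\<sigma> a)))"
    proof (rule prod_mono)
      fix a assume a: "a \<in> U"
      have y0: "0 \<le> Y a (\<sigma> a)" using Y0 a by auto
      have y1: "Y a (\<sigma> a) \<le> 1" using Y1[OF a sU[OF a]] .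
      have "exp (Y a (\<sigma> a)) \<le> 1 + Y a (\<sigma> a) + (Y a (\<sigma> a))^2" by (rule exp_bound[OF y0 y1])
      also have "\<dots> \<le> 1 + 2 * Y a (\<sigma> a)" using y0 y1 by (simp add: power2_eq_square mult_left_le)
      finally show "0 \<le> exp (Y a (\<sigma> a)) \<and> exp (Y a (\<sigma> a)) \<le> 1 + 2 * Y a (\<sigma> a)" by simp
    qed
    finally have E: "exp (\<Sum>a\<in>U. Y a (\<sigma> a)) \<le> (\<Prod>a\<in>U. (1 + 2 * Y a (\<sigma> a)))" .
    show ?thesis
    proof (cases "risk p m (inv \<sigma> \<circ> h) \<le> \<epsilon>")
      case True
      have "real u / real p - (\<Sum>a\<in>U. pmf W (a, \<sigma> a)) \<le> \<epsilon>" using riskbound[OF s] True by linarith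
      then have "real u - (\<Sum>a\<in>U. Y a (\<sigma> a)) \<le> \<epsilon> * real p"
        using p by (simp add: Y_def sum_distrib_left[symmetric] field_simps)
      then have "1 \<le> exp (\<epsilon> * real p - real u) * exp (\<Sum>a\<in>U. Y a (\<sigma> a))"
        by (simp add: exp_add[symmetric])
      also have "\<dots> \<le> exp (\<epsilon> * real p - real u) * (\<Prod>a\<in>U. (1 + 2 * Y a (\<sigma> a)))"
        using E by simp
      finally show ?thesis using True by simp
    next
      case False
      have "0 \<le> (\<Prod>a\<in>U. (1 + 2 * Y a (\<sigma> a)))" using Y0 sU by (intro prod_nonneg) auto
      then show ?thesis using False by simp
    qed
  qed
  have "measure_pmf.prob (pmf_of_set PU) {\<sigma>. risk p m (inv \<sigma> \<circ> h) \<le> \<epsilon>}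
      = real (card (PU \<inter> {\<sigma>. risk p m (inv \<sigma> \<circ> h) \<le> \<epsilon>})) / real (card PU)"
    using fPU nePU by (simp add: measure_pmf_of_set)
  also have "real (card (PU \<inter> {\<sigma>. risk p m (inv \<sigma> \<circ> h) \<le> \<epsilon>})) = (\<Sum>\<sigma>\<in>PU. indicator {\<sigma>. risk p m (inv \<sigma> \<circ> h) \<le> \<epsilon>} \<sigma>)"
  proof -
    have "(\<Sum>\<sigma>\<in>PU. (indicator {\<sigma>. risk p m (inv \<sigma> \<circ> h) \<le> \<epsilon>} \<sigma> :: real)) = real (card (PU \<inter> {\<sigma>. risk p m (inv \<sigma> \<circ> h) \<le> \<epsilon>}))"
    proof -
      have "real (card (PU \<inter> {\<sigma>. risk p m (inv \<sigma> \<circ> h) \<le> \<epsilon>})) = (\<Sum>\<sigma>\<in>PU \<inter> {\<sigma>. risk p m (inv \<sigma> \<circ> h) \<le> \<epsilon>}. (1::real))"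
        by simp
      also have "\<dots> = (\<Sum>\<sigma>\<in>PU. (indicator {\<sigma>. risk p m (inv \<sigma> \<circ> h) \<le> \<epsilon>} \<sigma> :: real))"
        unfolding sum.inter_restrict[OF fPU] by (intro sum.cong) (auto simp: indicator_def)
      finally show ?thesis by simp
    qed
    then show ?thesis by simp
  qed
  also have "\<dots> \<le> (\<Sum>\<sigma>\<in>PU. exp (\<epsilon> * real p - real u) * (\<Prod>a\<in>U. (1 + 2 * Y a (\<sigma> a))))"
    by (rule sum_mono) (rule ind)
  also have "\<dots> = exp (\<epsilon> * real p - real u) * (\<Sum>\<sigma>\<in>PU. (\<Prod>a\<in>U. (1 + 2 * Y a (\<sigma> a))))"
    by (simp add: sum_distrib_left)
  also have "\<dots> \<le> exp (\<epsilon> * real p - real u) * (fact u * ((real u + 1) * (real u + 2) / 2))"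
    using perm_prod_bound[OF fU, of Y] Y0 Ysum unfolding PU_def u_def by (intro mult_left_mono) auto
  finally have "measure_pmf.prob (pmf_of_set PU) {\<sigma>. risk p m (inv \<sigma> \<circ> h) \<le> \<epsilon>}
      \<le> exp (\<epsilon> * real p - real u) * (fact u * ((real u + 1) * (real u + 2) / 2)) / fact u"
    using cPU unfolding comp_def by (simp add: divide_right_mono)
  then show ?thesis unfolding PU_def u_def by (simp add: mult.commute)
qed

lemma bind_map_commute:
  "bind_pmf R (\<lambda>\<sigma>. map_pmf (f \<sigma>) Q) = bind_pmf Q (\<lambda>h. map_pmf (\<lambda>\<sigma>. f \<sigma> h) R)"
  unfolding map_pmf_def by (rule bind_commute_pmf)

lemma part2:
  assumes p: "p > 0" "m \<ge> 1" and S: "S \<in> samples p m n" and eq: "label_perm_equivariant p m n A"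
    and eps: "\<epsilon> \<ge> 0"
  shows "emeasure (A S) {h. risk p m h \<le> \<epsilon>} \<le>
    ennreal ((real (card ({..<p} - snd ` set S)) + 1) * (real (card ({..<p} - snd ` set S)) + 2) / 2
       * exp (\<epsilon> * real p - real (card ({..<p} - snd ` set S))))"
proof -
  define U where "U = {..<p} - snd ` set S"
  define C where "C = (real (card U) + 1) * (real (card U) + 2) / 2 * exp (\<epsilon> * real p - real (card U))"
  define E where "E = {h. risk p m h \<le> \<epsilon>}"
  define X where "X = Xm p m"
  define PU where "PU = {\<sigma>. \<sigma> permutes U}"
  define R where "R = pmf_of_set PU"
  have US: "U \<subseteq> {..<p}" by (auto simp: U_def)
  have fU: "finite U" using US finite_subset by blast
  have fPU: "finite PU" unfolding PU_def by (rule finite_permutations[OF fU])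
  have nePU: "PU \<noteq> {}" unfolding PU_def using permutes_id by blast
  have setR: "set_pmf R = PU" unfolding R_def using fPU nePU by simp
  have Erestr: "(\<lambda>h. restrict h X) -` E = E"
    using risk_restrict[OF p(1)] by (auto simp: E_def X_def)
  have inv_step: "emeasure (A S) E = emeasure (A S) {h. inv \<sigma> \<circ> h \<in> E}" if s: "\<sigma> \<in> PU" for \<sigma>
  proof -
    define \<tau> where "\<tau> = inv \<sigma>"
    have tU: "\<tau> permutes U" unfolding \<tau>_def using s by (simp add: PU_def permutes_inv)
    have tp: "\<tau> permutes {..<p}" using permutes_subset[OF tU US] .
    have mapS: "map (\<lambda>(x, y). (x, \<tau> y)) S = S"
    proof (rule map_idI)
      fix z assume z: "z \<in> set S"
      obtain x y where zxy: "z = (x, y)" by (cases z)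
      have "y \<in> snd ` set S" using z zxy by force
      then have "y \<notin> U" by (simp add: U_def)
      then have "\<tau> y = y" using permutes_not_in[OF tU] by blast
      then show "(case z of (x, y) \<Rightarrow> (x, \<tau> y)) = z" using zxy by simp
    qed
    have eqv: "map_pmf (\<lambda>h. restrict h X) (A S) = map_pmf (\<lambda>h. restrict (\<tau> \<circ> h) X) (A S)"
      using eq S tp unfolding label_perm_equivariant_def X_def by (metis mapS)
    have "emeasure (A S) E = emeasure (A S) ((\<lambda>h. restrict h X) -` E)" by (simp add: Erestr)
    also have "\<dots> = emeasure (map_pmf (\<lambda>h. restrict h X) (A S)) E" by simp
    also have "\<dots> = emeasure (map_pmf (\<lambda>h. restrict (\<tau> \<circ> h) X) (A S)) E" by (simp only: eqv)
    also have "\<dots> = emeasure (A S) ((\<lambda>h. \<tau> \<circ> h) -` ((\<lambda>h. restrict h X) -` E))" by (simp add: vimage_def)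
    also have "\<dots> = emeasure (A S) {h. inv \<sigma> \<circ> h \<in> E}"
    proof -
      have "\<And>g. restrict g X \<in> E \<longleftrightarrow> g \<in> E" using Erestr by blast
      then show ?thesis by (simp add: \<tau>_def vimage_def)
    qed
    finally show ?thesis .
  qed
  have "emeasure (A S) E = (\<integral>\<^sup>+\<sigma>. emeasure (A S) E \<partial>R)"
    by (simp add: measure_pmf.emeasure_space_1)
  also have "\<dots> = (\<integral>\<^sup>+\<sigma>. emeasure (A S) {h. inv \<sigma> \<circ> h \<in> E} \<partial>R)"
  proof (intro nn_integral_cong_AE AE_pmfI)
    fix \<sigma> assume "\<sigma> \<in> set_pmf R"
    then have "\<sigma> \<in> PU" using setR by blast
    then show "emeasure (A S) E = emeasure (A S) {h. inv \<sigma> \<circ> h \<in> E}" by (rule inv_step)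
  qed
  also have "\<dots> = emeasure (bind_pmf R (\<lambda>\<sigma>. map_pmf (\<lambda>h. inv \<sigma> \<circ> h) (A S))) E"
    by (simp add: vimage_def)
  also have "\<dots> = emeasure (bind_pmf (A S) (\<lambda>h. map_pmf (\<lambda>\<sigma>. inv \<sigma> \<circ> h) R)) E"
    by (subst bind_map_commute) (rule refl)
  also have "\<dots> = (\<integral>\<^sup>+h. emeasure R {\<sigma>. inv \<sigma> \<circ> h \<in> E} \<partial>A S)"
    by (simp add: vimage_def)
  also have "\<dots> \<le> (\<integral>\<^sup>+h. ennreal C \<partial>A S)"
  proof (rule nn_integral_mono)
    fix h
    have "measure_pmf.prob R {\<sigma>. inv \<sigma> \<circ> h \<in> E} \<le> C"
      using pointwise_bound[OF p US eps, of h] unfolding R_def PU_def C_def E_def by simp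
    then show "emeasure R {\<sigma>. inv \<sigma> \<circ> h \<in> E} \<le> ennreal C"
      by (simp add: measure_pmf.emeasure_eq_measure ennreal_leI)
  qed
  also have "\<dots> = ennreal C" by (simp add: measure_pmf.emeasure_space_1)
  finally show ?thesis unfolding E_def C_def U_def .
qed

lemma exp09: "ln (2.1::real) \<le> 0.9"
proof -
  have "(1.3::real) ^ 3 \<le> exp (0.3) ^ 3"
    using exp_ge_add_one_self[of "0.3::real"] by (intro power_mono) auto
  also have "\<dots> = exp (0.9)" by (simp add: exp_of_nat_mult[symmetric])
  finally have a: "(1.3::real) ^ 3 \<le> exp (0.9)" .
  have "(2.1::real) \<le> 1.3 ^ 3" by (simp add: power3_eq_cube)
  then have "2.1 \<le> exp (0.9::real)" using a by linarith
  then have "ln 2.1 \<le> ln (exp (0.9::real))" by (intro ln_mono) auto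
  then show ?thesis by simp
qed

lemma part1_real:
  fixes \<epsilon> :: real and p s n :: nat
  assumes e: "0 < \<epsilon>" and ep: "\<epsilon> * real p \<ge> 10"
    and L1: "ln (1/\<epsilon>) \<ge> 1" and n: "real n \<le> real p * (ln (1/\<epsilon>) - 1)"
    and s1: "real s + 1 \<ge> 2 * \<epsilon> * real p" and s2: "real s + 1 < 2 * \<epsilon> * real p + 1" and sp: "s \<le> p"
  shows "(1 + \<epsilon>/20) ^ n / Phi (\<epsilon>/20) p (p - s) \<le> exp (- \<epsilon> * real p / 400)"
proof -
  define g where "g = \<epsilon> / 20"
  define L where "L = ln (1/\<epsilon>)"
  have g0: "g \<ge> 0" using e by (simp add: g_def)
  have pp: "real p > 0" using ep e by (metis mult_pos_pos not_less mult_nonpos_nonneg order.strict_trans2 zero_less_numeral less_le_not_le  mult_le_0_iff)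
  have sge: "real s \<ge> \<epsilon> * real p" using s1 ep by linarith
  have s_ge1: "1 \<le> s" using sge ep by linarith
  have gp: "g * real p \<le> real s + 1" using s1 e pp by (simp add: g_def)
  have num: "(1 + g) ^ n \<le> exp (g * real p * (L - 1))"
  proof -
    have "(1 + g) ^ n \<le> exp g ^ n"
      using g0 by (intro power_mono) (auto simp: exp_ge_add_one_self add.commute)
    also have "\<dots> = exp (g * real n)" by (simp add: exp_of_nat_mult[symmetric] mult.commute)
    also have "\<dots> \<le> exp (g * real p * (L - 1))"
      using n g0 by (simp add: L_def mult.assoc mult_left_mono)
    finally show ?thesis .
  qed
  have lnb: "ln ((real p + 1) / (real s + 1)) \<ge> L - 0.9"
  proof -
    have "real s + 1 \<le> 2.1 * \<epsilon> * real p" using s2 ep by linarith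
    then have "(real p) / (2.1 * \<epsilon> * real p) \<le> (real p + 1) / (real s + 1)"
      using pp e by (intro frac_le) auto
    then have "1 / (2.1 * \<epsilon>) \<le> (real p + 1) / (real s + 1)" using pp by simp
    then have "ln (1 / (2.1 * \<epsilon>)) \<le> ln ((real p + 1) / (real s + 1))"
      using e by (intro ln_mono) auto
    moreover have "ln (1 / (2.1 * \<epsilon>)) = L - ln 2.1"
      using e by (simp add: L_def ln_div ln_mult)
    ultimately show ?thesis using exp09 by linarith
  qed
  have den: "Phi g p (p - s) \<ge> exp (g * real p * (L - 0.9) - g^2 * real p / \<epsilon>)"
  proof -
    have "g * real p * (L - 0.9) - g^2 * real p / \<epsilon> \<le> g * real p * ln ((real p + 1) / (real s + 1)) - g^2 * real p ^ 2 / real s"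
    proof -
      have "g * real p * (L - 0.9) \<le> g * real p * ln ((real p + 1) / (real s + 1))"
        using lnb g0 pp by (intro mult_left_mono) auto
      moreover have "g^2 * real p ^ 2 / real s \<le> g^2 * real p ^ 2 / (\<epsilon> * real p)"
        using sge e pp s_ge1 by (intro divide_left_mono mult_pos_pos) auto
      moreover have "g^2 * real p ^ 2 / (\<epsilon> * real p) = g^2 * real p / \<epsilon>"
        using pp e by (simp add: power2_eq_square)
      ultimately show ?thesis by linarith
    qed
    then have "exp (g * real p * (L - 0.9) - g^2 * real p / \<epsilon>) \<le> exp (g * real p * ln ((real p + 1) / (real s + 1)) - g^2 * real p ^ 2 / real s)"
      by simp
    also have "\<dots> \<le> Phi g p (p - s)" by (rule Phi_lower[OF g0 s_ge1 sp gp])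
    finally show ?thesis .
  qed
  have "(1 + g) ^ n / Phi g p (p - s) \<le> exp (g * real p * (L - 1)) / exp (g * real p * (L - 0.9) - g^2 * real p / \<epsilon>)"
    using num den by (intro frac_le) auto
  also have "\<dots> = exp (g * real p * (L - 1) - (g * real p * (L - 0.9) - g^2 * real p / \<epsilon>))"
    by (simp add: exp_diff)
  also have "g * real p * (L - 1) - (g * real p * (L - 0.9) - g^2 * real p / \<epsilon>) = - \<epsilon> * real p / 400"
    using e by (simp add: g_def power2_eq_square field_simps)
  finally show ?thesis by (simp add: g_def)
qed

lemma core_bound:
  fixes \<epsilon> :: real
  assumes p2: "p \<ge> 2" and m: "m \<ge> 1" and e: "0 < \<epsilon>" "\<epsilon> < 1/2" and ep: "\<epsilon> * real p \<ge> 10"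
    and n: "real n \<le> (real p - 1) * (ln (1/\<epsilon>) - 1)"
    and val: "valid_learner p m n A" and eq: "label_perm_equivariant p m n A"
  shows "measure_pmf.prob (output_dist p m n A) {h. risk p m h \<le> \<epsilon>}
     \<le> exp (- \<epsilon> * real p / 400) + (real p + 1) * (real p + 2) / 2 * exp (- \<epsilon> * real p)"
proof -
  have p0: "p > 0" using p2 by simp
  have pp: "real p \<ge> 2" using p2 by simp
  define L where "L = ln (1/\<epsilon>)"
  have L1: "L \<ge> 1"
  proof (rule ccontr)
    assume "\<not> L \<ge> 1"
    then have "(real p - 1) * (L - 1) < 0" using pp by (intro mult_pos_neg) auto
    then show False using n by (simp add: L_def)
  qed
  have n': "real n \<le> real p * (ln (1/\<epsilon>) - 1)"
  proof -
    have "(real p - 1) * (L - 1) \<le> real p * (L - 1)" using L1 by (intro mult_right_mono) auto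
    then show ?thesis using n by (simp add: L_def)
  qed
  define c where "c = nat (ceiling (2 * \<epsilon> * real p))"
  have c1: "real c \<ge> 2 * \<epsilon> * real p" unfolding c_def by (rule real_nat_ceiling_ge)
  have c2: "real c < 2 * \<epsilon> * real p + 1"
  proof -
    have "0 \<le> 2 * \<epsilon> * real p" using e by simp
    then have "real c = real_of_int (ceiling (2 * \<epsilon> * real p))" unfolding c_def by simp
    then show ?thesis using ceiling_correct[of "2 * \<epsilon> * real p"] by linarith
  qed
  have c3: "c \<le> p"
  proof -
    have "(2 * \<epsilon>) * real p \<le> 1 * real p" using e pp by (intro mult_right_mono) auto
    then have h: "2 * \<epsilon> * real p \<le> real_of_int (int p)" by simp
    have "ceiling (2 * \<epsilon> * real p) \<le> int p" by (rule ceiling_le[OF h])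
    then have "nat (ceiling (2 * \<epsilon> * real p)) \<le> nat (int p)" by (rule nat_mono)
    then show ?thesis unfolding c_def by (simp only: nat_int)
  qed
  have cge: "c \<ge> 1" using c1 ep by (simp; linarith)
  define s where "s = c - 1"
  have s1: "real s + 1 = real c" using cge by (simp add: s_def)
  have sp: "s \<le> p" using c3 by (simp add: s_def)
  define K where "K = (real p + 1) * (real p + 2) / 2 * exp (- \<epsilon> * real p)"
  have K0: "K \<ge> 0" by (simp add: K_def)
  define Bad :: "((nat \<Rightarrow> nat) \<times> nat) list set" where "Bad = {S. card ({..<p} - snd ` set S) \<le> s}"
  define E where "E = {h. risk p m h \<le> \<epsilon>}"
  have "emeasure (output_dist p m n A) E = (\<integral>\<^sup>+S. emeasure (A S) E \<partial>sample_dist p m n)"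
    by (simp add: output_dist_def)
  also have "\<dots> \<le> (\<integral>\<^sup>+S. indicator Bad S + ennreal K \<partial>sample_dist p m n)"
  proof (rule nn_integral_mono_AE, rule AE_pmfI)
    fix S assume S: "S \<in> set_pmf (sample_dist p m n)"
    have Ss: "S \<in> samples p m n" by (rule sample_support[OF p0 S])
    show "emeasure (A S) E \<le> indicator Bad S + ennreal K"
    proof (cases "S \<in> Bad")
      case True
      have "emeasure (A S) E \<le> 1" by (rule measure_pmf.emeasure_le_1)
      also have "\<dots> \<le> indicator Bad S + ennreal K" using True by simp
      finally show ?thesis .
    next
      case False
      define u where "u = card ({..<p} - snd ` set S)"
      have us: "real u \<ge> 2 * \<epsilon> * real p" using False c1 s1 by (simp add: Bad_def u_def)
      have up: "u \<le> p" unfolding u_def by (metis card_Diff_subset_Int card_lessThan diff_le_self finite_Int finite_lessThan)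
      have "emeasure (A S) E \<le> ennreal ((real u + 1) * (real u + 2) / 2 * exp (\<epsilon> * real p - real u))"
        using part2[OF p0 m Ss eq, of \<epsilon>] e unfolding E_def u_def by simp
      also have "\<dots> \<le> ennreal K"
      proof (rule ennreal_leI)
        have "(real u + 1) * (real u + 2) / 2 \<le> (real p + 1) * (real p + 2) / 2"
          using up by (intro divide_right_mono mult_mono) auto
        moreover have "exp (\<epsilon> * real p - real u) \<le> exp (- \<epsilon> * real p)" using us by simp
        ultimately show "(real u + 1) * (real u + 2) / 2 * exp (\<epsilon> * real p - real u) \<le> K"
          unfolding K_def by (intro mult_mono) auto
      qed
      also have "\<dots> \<le> indicator Bad S + ennreal K" by simp
      finally show ?thesis .
    qed
  qed
  also have "\<dots> = emeasure (sample_dist p m n) Bad + ennreal K"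
    by (subst nn_integral_add) (auto simp: measure_pmf.emeasure_space_1)
  also have "emeasure (sample_dist p m n) Bad = emeasure (iid_list n (pmf_of_set {..<p})) {ys. p - s \<le> card (set ys \<inter> {..<p})}"
  proof -
    have "emeasure (sample_dist p m n) Bad = emeasure (map_pmf (map snd) (sample_dist p m n)) {ys. card ({..<p} - set ys) \<le> s}"
      by (simp add: Bad_def vimage_def)
    also have "{ys. card ({..<p} - set ys) \<le> s} = {ys. p - s \<le> card (set ys \<inter> {..<p})}"
    proof -
      have "card ({..<p} - set ys) = p - card (set ys \<inter> {..<p})" for ys :: "nat list"
        by (metis card_Diff_subset_Int card_lessThan finite_Int finite_lessThan Int_commute)
      moreover have "card (set ys \<inter> {..<p}) \<le> p" for ys :: "nat list"
        by (metis card_lessThan card_mono finite_lessThan inf_le2)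
      ultimately show ?thesis using sp by force
    qed
    finally show ?thesis by (simp add: sample_labels[OF p0 m])
  qed
  also have "emeasure (iid_list n (pmf_of_set {..<p})) {ys. p - s \<le> card (set ys \<inter> {..<p})}
      \<le> ennreal ((1 + \<epsilon>/20) ^ n / Phi (\<epsilon>/20) p (p - s))"
    by (rule markov1[OF p0]) (use e in simp)
  also have "(1 + \<epsilon>/20) ^ n / Phi (\<epsilon>/20) p (p - s) \<le> exp (- \<epsilon> * real p / 400)"
    using part1_real[OF e(1) ep L1[unfolded L_def] n'] s1 c1 c2 sp by simp
  finally have "emeasure (output_dist p m n A) E \<le> ennreal (exp (- \<epsilon> * real p / 400)) + ennreal K"
    by (simp add: add_right_mono ennreal_leI)
  then have "emeasure (output_dist p m n A) E \<le> ennreal (exp (- \<epsilon> * real p / 400) + K)"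
    using K0 by (simp add: ennreal_plus)
  then have "ennreal (measure_pmf.prob (output_dist p m n A) E) \<le> ennreal (exp (- \<epsilon> * real p / 400) + K)"
    by (simp only: measure_pmf.emeasure_eq_measure)
  then have "measure_pmf.prob (output_dist p m n A) E \<le> exp (- \<epsilon> * real p / 400) + K"
    using K0 by (subst (asm) ennreal_le_iff) auto
  then show ?thesis by (simp only: E_def K_def)
qed

lemma exp_lim0: "a > 0 \<Longrightarrow> ((\<lambda>p::nat. exp (- a * real p)) \<longlonglongrightarrow> 0)"
  by real_asymp

lemma poly_exp_ev: "(e::real) > 0 \<Longrightarrow> eventually (\<lambda>p::nat. (real p+1)*(real p+2)/2 * exp(-e*real p) \<le> exp (-(1/800)*e*real p)) at_top"
  by real_asymp

theorem mainTheorem8: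
  "\<exists>c1 c2 :: real. c1 > 0 \<and> c2 > 0 \<and>
    (\<forall>\<epsilon> \<delta> :: real. 0 < \<epsilon> \<and> \<epsilon> < 1/2 \<and> 0 < \<delta> \<and> \<delta> < 1/2 \<longrightarrow>
      (\<exists>p0 :: nat. \<forall>p \<ge> p0. \<forall>m :: nat. m \<ge> 1 \<longrightarrow>
        (let B = exp (- ((exp 1 - 1)^2 / (2 * ln (1/\<epsilon>))) * \<epsilon>^2 * real p)
                 + exp (- c1 * \<epsilon> * real p)
                 + exp (- c2 * \<epsilon>^2 * real p / ln (1/\<epsilon>))
         in B \<le> \<delta> \<and>
            (\<forall>n :: nat. \<forall>A :: learner.
               real n \<le> (real p - 1) * (ln (1/\<epsilon>) - 1) \<longrightarrow>
               valid_learner p m n A \<longrightarrow> label_perm_equivariant p m n A \<longrightarrow>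
               measure_pmf.prob (output_dist p m n A) {h. risk p m h \<le> \<epsilon>} \<le> B))))"
proof (rule exI[of _ "1/800::real"], rule exI[of _ "1/400::real"], intro conjI allI impI)
  show "(0::real) < 1/800" by simp
  show "(0::real) < 1/400" by simp
  fix \<epsilon> \<delta> :: real
  assume ed: "0 < \<epsilon> \<and> \<epsilon> < 1/2 \<and> 0 < \<delta> \<and> \<delta> < 1/2"
  then have e0: "0 < \<epsilon>" and e1: "\<epsilon> < 1/2" and d0: "0 < \<delta>" by auto
  define L where "L = ln (1/\<epsilon>)"
  have Lpos: "L > 1/2"
  proof -
    have "ln \<epsilon> \<le> \<epsilon> - 1" using e0 by (rule ln_le_minus_one)
    then show ?thesis using e1 e0 by (simp add: L_def ln_div)
  qed
  define a1 where "a1 = (exp 1 - 1)^2 / (2 * L) * \<epsilon>^2"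
  define a2 where "a2 = 1/800 * \<epsilon>"
  define a3 where "a3 = 1/400 * \<epsilon>^2 / L"
  have a1: "a1 > 0" unfolding a1_def using Lpos e0 by (intro mult_pos_pos divide_pos_pos) (auto simp: exp_gt_one)
  have a2: "a2 > 0" unfolding a2_def using e0 by simp
  have a3: "a3 > 0" unfolding a3_def using Lpos e0 by simp
  define B where "B = (\<lambda>p::nat. exp (- ((exp 1 - 1)^2 / (2 * ln (1/\<epsilon>))) * \<epsilon>^2 * real p)
                 + exp (- (1/800) * \<epsilon> * real p)
                 + exp (- (1/400) * \<epsilon>^2 * real p / ln (1/\<epsilon>)))"
  have Beq: "B = (\<lambda>p. exp (- a1 * real p) + exp (- a2 * real p) + exp (- a3 * real p))"
    unfolding B_def a1_def a2_def a3_def L_def by (intro ext) (simp add: algebra_simps)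
  have "B \<longlonglongrightarrow> 0 + 0 + 0"
    unfolding Beq by (intro tendsto_add exp_lim0 a1 a2 a3)
  then have ev1: "eventually (\<lambda>p. B p < \<delta>) at_top" using d0 by (intro order_tendstoD(2)) auto
  have ev2: "eventually (\<lambda>p::nat. p \<ge> 2 \<and> \<epsilon> * real p \<ge> 10) at_top"
  proof (rule eventually_conj)
    show "eventually (\<lambda>p::nat. p \<ge> 2) at_top" by (rule eventually_ge_at_top)
    show "eventually (\<lambda>p::nat. \<epsilon> * real p \<ge> 10) at_top" using e0 by real_asymp
  qed
  have ev3: "eventually (\<lambda>p::nat. (real p+1)*(real p+2)/2 * exp(-\<epsilon>*real p) \<le> exp (-(1/800)*\<epsilon>*real p)) at_top"
    by (rule poly_exp_ev[OF e0])
  from eventually_conj[OF ev1 eventually_conj[OF ev2 ev3]]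
  obtain p0 where p0: "\<And>p. p \<ge> p0 \<Longrightarrow> B p < \<delta> \<and> (p \<ge> 2 \<and> \<epsilon> * real p \<ge> 10) \<and>
      (real p+1)*(real p+2)/2 * exp(-\<epsilon>*real p) \<le> exp (-(1/800)*\<epsilon>*real p)"
    unfolding eventually_at_top_linorder by blast
  show "\<exists>p0 :: nat. \<forall>p \<ge> p0. \<forall>m :: nat. m \<ge> 1 \<longrightarrow>
        (let B = exp (- ((exp 1 - 1)^2 / (2 * ln (1/\<epsilon>))) * \<epsilon>^2 * real p)
                 + exp (- (1/800) * \<epsilon> * real p)
                 + exp (- (1/400) * \<epsilon>^2 * real p / ln (1/\<epsilon>))
         in B \<le> \<delta> \<and>
            (\<forall>n :: nat. \<forall>A :: learner.
               real n \<le> (real p - 1) * (ln (1/\<epsilon>) - 1) \<longrightarrow>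
               valid_learner p m n A \<longrightarrow> label_perm_equivariant p m n A \<longrightarrow>
               measure_pmf.prob (output_dist p m n A) {h. risk p m h \<le> \<epsilon>} \<le> B))"
  proof (intro exI[of _ p0] allI impI)
    fix p m :: nat
    assume pp0: "p \<ge> p0" and m: "m \<ge> 1"
    note P = p0[OF pp0]
    have "B p \<le> \<delta>" using P by simp
    moreover have "measure_pmf.prob (output_dist p m n A) {h. risk p m h \<le> \<epsilon>} \<le> B p"
      if n: "real n \<le> (real p - 1) * (ln (1/\<epsilon>) - 1)" and val: "valid_learner p m n A"
        and eq: "label_perm_equivariant p m n A" for n A
    proof -
      have "measure_pmf.prob (output_dist p m n A) {h. risk p m h \<le> \<epsilon>}
         \<le> exp (- \<epsilon> * real p / 400) + (real p + 1) * (real p + 2) / 2 * exp (- \<epsilon> * real p)"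
        using P by (intro core_bound[OF _ m e0 e1 _ n val eq]) auto
      also have "\<dots> \<le> exp (- (1/400) * \<epsilon>^2 * real p / ln (1/\<epsilon>)) + exp (- (1/800) * \<epsilon> * real p)"
      proof (rule add_mono)
        have "\<epsilon>^2 / L \<le> \<epsilon>"
          using Lpos e0 e1 by (simp add: power2_eq_square field_simps mult_left_mono)
        then have "(1/400) * (\<epsilon>^2 / L) * real p \<le> (1/400) * \<epsilon> * real p"
          by (intro mult_right_mono mult_left_mono) auto
        then show "exp (- \<epsilon> * real p / 400) \<le> exp (- (1/400) * \<epsilon>^2 * real p / ln (1/\<epsilon>))"
          by (simp add: L_def)
        show "(real p + 1) * (real p + 2) / 2 * exp (- \<epsilon> * real p) \<le> exp (- (1/800) * \<epsilon> * real p)"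
          using P by simp
      qed
      also have "\<dots> \<le> B p" unfolding B_def by simp
      finally show ?thesis .
    qed
    ultimately show "let B = exp (- ((exp 1 - 1)^2 / (2 * ln (1/\<epsilon>))) * \<epsilon>^2 * real p)
                 + exp (- (1/800) * \<epsilon> * real p)
                 + exp (- (1/400) * \<epsilon>^2 * real p / ln (1/\<epsilon>))
         in B \<le> \<delta> \<and>
            (\<forall>n :: nat. \<forall>A :: learner.
               real n \<le> (real p - 1) * (ln (1/\<epsilon>) - 1) \<longrightarrow>
               valid_learner p m n A \<longrightarrow> label_perm_equivariant p m n A \<longrightarrow>
               measure_pmf.prob (output_dist p m n A) {h. risk p m h \<le> \<epsilon>} \<le> B)"
      unfolding B_def Let_def by blast
  qed
qed

end
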